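(* Let $n\geq 2$, and let $\varphi$ be a skew morphism of $\mathbb Z_n$ with complexity $c$ and auto-order $m$. Then: (a) $c\geq 0$ and $m\geq 2$; (b) $\varphi$ is the trivial permutation if and only if $c=0$; (c) $\varphi$ is a non-trivial automorphism if and only if $c=1$; (d) $\varphi$ is a proper skew morphism if and only if $c\geq 2$; (e) if $c\geq 1$, then $\varphi'$ has complexity $c-1$ and auto-order $m$; (f) if $c\geq 1$, then $\varphi^{(c-1)}$ is an automorphism of order $m$.
   Context: A skew morphism of a finite group $G$ is a permutation $\varphi$ of $G$ fixing the identity such that for each $a\in G$ there is a non-negative integer $\pi_{\varphi}(a)$ (the power function) with $\varphi(ab)=\varphi(a)\varphi^{\pi_{\varphi}(a)}(b)$ for all $b\in G$; ${\rm ord}(\varphi)$ is the order of $\langle\varphi\rangle$. A skew morphism is proper if it is not a group automorphism. For a skew morphism $\varphi$ of $\mathbb Z_n$, the derived skew morphism $\varphi'$ is the skew morphism of $\mathbb Z_{{\rm ord}(\varphi)}$ given by $\varphi'(a)=\sigma_{\varphi}(a,1)=\sum_{0\leq i\leq a-1}\pi_{\varphi}(\varphi^i(1))$ (taken in $\mathbb Z_{{\rm ord}(\varphi)}$). For $n\geq 2$, since ${\rm ord}(\varphi)<n$, repeatedly taking derived skew morphisms eventually yields a skew morphism of a non-trivial cyclic group that is the trivial permutation (and whose derived skew morphism is the identity of the trivial group). Writing $\varphi^{(0)}=\varphi$, $\varphi^{(1)}=\varphi'$, and in general $\varphi^{(i)}$ for $\varphi$ with the derived-skew-morphism operation applied $i$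 times, the complexity $c$ of $\varphi$ is the number of steps $c$ such that $\varphi^{(c)}$ is this trivial permutation of a non-trivial cyclic group $\mathbb Z_m$, and $m$ is called the auto-order of $\varphi$. *)

theory Defs
  imports Main
begin

text \<open>The cyclic group Z_n is represented by the carrier {0..<n} of naturals with
addition modulo n; a permutation of Z_n is a function nat => nat that is a
bijection of {0..<n} (values outside {0..<n} are irrelevant).\<close>

definition is_skew_morphism :: "nat \<Rightarrow> (nat \<Rightarrow> nat) \<Rightarrow> bool" where
  "is_skew_morphism n \<phi> \<longleftrightarrow> n \<ge> 1 \<and> bij_betw \<phi> {0..<n} {0..<n} \<and> \<phi> 0 = 0 \<and>
     (\<forall>a<n. \<exists>k::nat. \<forall>b<n. \<phi> ((a + b) mod n) = (\<phi> a + (\<phi> ^^ k) b) mod n)"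

definition is_automorphism :: "nat \<Rightarrow> (nat \<Rightarrow> nat) \<Rightarrow> bool" where
  "is_automorphism n \<phi> \<longleftrightarrow> n \<ge> 1 \<and> bij_betw \<phi> {0..<n} {0..<n} \<and>
     (\<forall>a<n. \<forall>b<n. \<phi> ((a + b) mod n) = (\<phi> a + \<phi> b) mod n)"

definition is_trivial_perm :: "nat \<Rightarrow> (nat \<Rightarrow> nat) \<Rightarrow> bool" where
  "is_trivial_perm n \<phi> \<longleftrightarrow> (\<forall>x<n. \<phi> x = x)"

definition is_proper_skew :: "nat \<Rightarrow> (nat \<Rightarrow> nat) \<Rightarrow> bool" where
  "is_proper_skew n \<phi> \<longleftrightarrow> is_skew_morphism n \<phi> \<and> \<not> is_automorphism n \<phi>"

definition skord :: "nat \<Rightarrow> (nat \<Rightarrow> nat) \<Rightarrow> nat" where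
  "skord n \<phi> = (LEAST k. k > 0 \<and> (\<forall>x<n. (\<phi> ^^ k) x = x))"

text \<open>Power function: the least admissible non-negative integer (the power function
is determined modulo ord(phi), so sums of its values taken modulo ord(phi) do not
depend on this choice).\<close>
definition skpow :: "nat \<Rightarrow> (nat \<Rightarrow> nat) \<Rightarrow> nat \<Rightarrow> nat" where
  "skpow n \<phi> a = (LEAST k. \<forall>b<n. \<phi> ((a + b) mod n) = (\<phi> a + (\<phi> ^^ k) b) mod n)"

text \<open>Derived skew morphism, as a pair (ord(phi), phi') with phi' on Z_{ord(phi)}:
phi'(a) = sum_{0<=i<=a-1} pi(phi^i(1)) taken in Z_{ord(phi)}.\<close>
definition derived :: "nat \<times> (nat \<Rightarrow> nat) \<Rightarrow> nat \<times> (nat \<Rightarrow> nat)" where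
  "derived p = (case p of (n, \<phi>) \<Rightarrow>
     (skord n \<phi>, \<lambda>a. (\<Sum>i<a. skpow n \<phi> ((\<phi> ^^ i) (1 mod n))) mod skord n \<phi>))"

definition iter_derived :: "nat \<Rightarrow> nat \<Rightarrow> (nat \<Rightarrow> nat) \<Rightarrow> nat \<times> (nat \<Rightarrow> nat)" where
  "iter_derived i n \<phi> = (derived ^^ i) (n, \<phi>)"

definition complexity :: "nat \<Rightarrow> (nat \<Rightarrow> nat) \<Rightarrow> nat" where
  "complexity n \<phi> = (LEAST c. fst (iter_derived c n \<phi>) \<ge> 2 \<and>
        is_trivial_perm (fst (iter_derived c n \<phi>)) (snd (iter_derived c n \<phi>)))"

definition auto_order :: "nat \<Rightarrow> (nat \<Rightarrow> nat) \<Rightarrow> nat" where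
  "auto_order n \<phi> = fst (iter_derived (complexity n \<phi>) n \<phi>)"

end

theory Submission imports Defs "HOL-Library.FuncSet" begin

lemma period_exists:
  assumes "finite A" "bij_betw f A A"
  shows "\<exists>k>0. \<forall>x\<in>A. (f ^^ k) x = x"
proof -
  define F where "F = (\<lambda>k. restrict (f ^^ k) A)"
  have maps: "(f ^^ k) x \<in> A" if "x \<in> A" for k x
    using bij_betw_funpow[OF assms(2), of k] that by (auto simp: bij_betw_def)
  have "range F \<subseteq> A \<rightarrow>\<^sub>E A"
    using maps by (auto simp: F_def)
  moreover have "finite (A \<rightarrow>\<^sub>E A)" using assms(1) by (simp add: finite_PiE)
  ultimately have "finite (range F)" by (rule finite_subset)
  hence "\<not> inj F" using finite_imageD infinite_UNIV_nat by blast
  then obtain i j where ij: "F i = F j" "i < j"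
    by (metis injI linorder_neqE_nat)
  have inj: "inj_on (f ^^ i) A" using bij_betw_funpow[OF assms(2)] by (simp add: bij_betw_def)
  have "\<forall>x\<in>A. (f ^^ (j - i)) x = x"
  proof
    fix x assume x: "x \<in> A"
    have "(f ^^ i) ((f ^^ (j - i)) x) = (f ^^ j) x"
      using ij(2) by (metis add_diff_inverse_nat comp_apply funpow_add less_imp_not_less)
    also have "\<dots> = (f ^^ i) x" using ij(1) x unfolding F_def by (metis restrict_apply')
    finally show "(f ^^ (j - i)) x = x" using inj x maps[OF x] by (auto dest: inj_onD)
  qed
  thus ?thesis using ij(2) by (intro exI[of _ "j - i"]) auto
qed

lemma mod_cancel_left:
  fixes n y u v :: nat
  assumes "u < n" "v < n" "(y + u) mod n = (y + v) mod n"
  shows "u = v"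
proof -
  have "n dvd (y + v) - (y + u)" if "u \<le> v" "(y + u) mod n = (y + v) mod n" for u v
    using mod_eq_dvd_iff_nat[of "y + u" "y + v" n] that by simp
  moreover have "d = 0" if "n dvd d" "d < n" for d :: nat
    using that by (metis dvd_imp_le neq0_conv not_le)
  ultimately show ?thesis using assms
  proof (cases "u \<le> v")
    case True
    then have "n dvd v - u" using mod_eq_dvd_iff_nat[of "y + u" "y + v" n] assms(3) by simp
    moreover have "v - u < n" using assms by simp
    ultimately show ?thesis using True by (metis dvd_imp_le neq0_conv not_le diff_is_0_eq le_antisym)
  next
    case False
    then have "n dvd u - v" using mod_eq_dvd_iff_nat[of "y + v" "y + u" n] assms(3) by simp
    moreover have "u - v < n" using assms by simp
    ultimately show ?thesis using False by (metis dvd_imp_le neq0_conv not_le diff_is_0_eq)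
  qed
qed

locale skm =
  fixes n :: nat and \<phi> :: "nat \<Rightarrow> nat"
  assumes sk: "is_skew_morphism n \<phi>"
begin

definition "N = skord n \<phi>"
definition "\<pi> = skpow n \<phi>"
definition "\<sigma> k x = (\<Sum>i<k. \<pi> ((\<phi> ^^ i) x))"

lemma n_pos: "n \<ge> 1" using sk by (simp add: is_skew_morphism_def)
lemma bij: "bij_betw \<phi> {0..<n} {0..<n}" using sk by (simp add: is_skew_morphism_def)
lemma phi0: "\<phi> 0 = 0" using sk by (simp add: is_skew_morphism_def)

lemma maps: "x < n \<Longrightarrow> (\<phi> ^^ k) x < n"
  using bij_betw_funpow[OF bij, of k] by (auto simp: bij_betw_def)
lemma inj_pow: "inj_on (\<phi> ^^ k) {0..<n}"
  using bij_betw_funpow[OF bij, of k] by (auto simp: bij_betw_def)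
lemma pow0: "(\<phi> ^^ k) 0 = 0"
  by (induction k) (auto simp: phi0)
lemma maps1: "x < n \<Longrightarrow> \<phi> x < n" using maps[of x 1] by simp

lemma skpow_prop:
  assumes "a < n" "b < n"
  shows "\<phi> ((a + b) mod n) = (\<phi> a + (\<phi> ^^ (\<pi> a)) b) mod n"
proof -
  have "\<exists>k. \<forall>b<n. \<phi> ((a + b) mod n) = (\<phi> a + (\<phi> ^^ k) b) mod n"
    using sk assms(1) by (simp add: is_skew_morphism_def)
  from LeastI_ex[OF this] show ?thesis using assms(2) unfolding \<pi>_def skpow_def by blast
qed

lemma N_ex: "\<exists>k. k > 0 \<and> (\<forall>x<n. (\<phi> ^^ k) x = x)"
  using period_exists[OF _ bij] by auto

lemma N_pos: "N > 0" and N_id: "x < n \<Longrightarrow> (\<phi> ^^ N) x = x"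
  using LeastI_ex[OF N_ex] unfolding N_def skord_def by auto

lemma N_min: "0 < k \<Longrightarrow> k < N \<Longrightarrow> \<exists>x<n. (\<phi> ^^ k) x \<noteq> x"
  using not_less_Least[of k "\<lambda>k. k > 0 \<and> (\<forall>x<n. (\<phi> ^^ k) x = x)"] unfolding N_def skord_def
  by auto

lemma N_le: "0 < k \<Longrightarrow> (\<forall>x<n. (\<phi> ^^ k) x = x) \<Longrightarrow> N \<le> k"
  unfolding N_def skord_def by (rule Least_le) auto

lemma pow_multN: "x < n \<Longrightarrow> (\<phi> ^^ (N * q)) x = x"
proof (induction q)
  case 0 then show ?case by simp
next
  case (Suc q)
  have "(\<phi> ^^ (N * Suc q)) x = (\<phi> ^^ N) ((\<phi> ^^ (N * q)) x)"
    by (simp add: funpow_add)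
  then show ?case using Suc N_id by simp
qed

lemma pow_mod: "x < n \<Longrightarrow> (\<phi> ^^ a) x = (\<phi> ^^ (a mod N)) x"
proof -
  assume x: "x < n"
  have "a = a mod N + N * (a div N)" by simp
  hence "(\<phi> ^^ a) x = (\<phi> ^^ (a mod N)) ((\<phi> ^^ (N * (a div N))) x)"
    by (metis comp_apply funpow_add)
  thus ?thesis using pow_multN[OF x] by simp
qed

lemma pow_eq_mod:
  assumes "\<forall>x<n. (\<phi> ^^ a) x = (\<phi> ^^ b) x"
  shows "a mod N = b mod N"
proof (rule ccontr)
  assume ne: "a mod N \<noteq> b mod N"
  define a' where "a' = a mod N"
  define b' where "b' = b mod N"
  have eq: "\<forall>x<n. (\<phi> ^^ a') x = (\<phi> ^^ b') x"
    using assms pow_mod unfolding a'_def b'_def by metis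
  have lt: "a' < N" "b' < N" using N_pos by (auto simp: a'_def b'_def)
  have gen: "False" if "p < q" "q < N" "\<forall>x<n. (\<phi> ^^ p) x = (\<phi> ^^ q) x" for p q
  proof -
    have "\<forall>x<n. (\<phi> ^^ (q - p)) x = x"
    proof (intro allI impI)
      fix x assume x: "x < n"
      have "(\<phi> ^^ p) ((\<phi> ^^ (q - p)) x) = (\<phi> ^^ q) x"
        using that(1) by (metis add_diff_inverse_nat comp_apply funpow_add less_imp_not_less)
      also have "\<dots> = (\<phi> ^^ p) x" using that(3) x by simp
      finally show "(\<phi> ^^ (q - p)) x = x"
        using inj_pow[of p] x maps[OF x, of "q - p"] by (auto dest: inj_onD)
    qed
    moreover have "q - p < N" "0 < q - p" using that by arith+
    ultimately show False using N_min[of "q - p"] by auto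
  qed
  show False
  proof (cases "a' < b'")
    case True then show False using gen[of a' b'] eq lt by auto
  next
    case False
    hence "b' < a'" using ne unfolding a'_def b'_def by auto
    then show False using gen[of b' a'] eq lt by auto
  qed
qed


lemma F1:
  assumes "a < n" "b < n"
  shows "(\<phi> ^^ k) ((a + b) mod n) = ((\<phi> ^^ k) a + (\<phi> ^^ (\<sigma> k a)) b) mod n"
proof (induction k)
  case 0 then show ?case using assms by (simp add: \<sigma>_def)
next
  case (Suc k)
  have "(\<phi> ^^ Suc k) ((a + b) mod n) = \<phi> (((\<phi> ^^ k) a + (\<phi> ^^ (\<sigma> k a)) b) mod n)"
    using Suc by simp
  also have "\<dots> = (\<phi> ((\<phi> ^^ k) a) + (\<phi> ^^ \<pi> ((\<phi> ^^ k) a)) ((\<phi> ^^ (\<sigma> k a)) b)) mod n"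
    using skpow_prop maps assms by blast
  also have "\<dots> = ((\<phi> ^^ Suc k) a + (\<phi> ^^ (\<sigma> (Suc k) a)) b) mod n"
    by (simp add: \<sigma>_def funpow_add add.commute)
  finally show ?case .
qed

lemma sigma_add: "\<sigma> (a + b) x = \<sigma> a x + \<sigma> b ((\<phi> ^^ a) x)"
proof (induction b)
  case 0 then show ?case by (simp add: \<sigma>_def)
next
  case (Suc b)
  have "(\<phi> ^^ (a + b)) x = (\<phi> ^^ b) ((\<phi> ^^ a) x)"
    by (metis add.commute comp_apply funpow_add)
  then show ?case using Suc by (simp add: \<sigma>_def)
qed

lemma sigma_N: assumes "x < n" shows "\<sigma> N x mod N = 0"
proof -
  have "\<forall>b<n. (\<phi> ^^ (\<sigma> N x)) b = (\<phi> ^^ 0) b"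
  proof (intro allI impI)
    fix b assume b: "b < n"
    have "(x + b) mod n = (x + (\<phi> ^^ (\<sigma> N x)) b) mod n"
      using F1[OF assms b, of N] N_id[OF assms] N_id[of "(x + b) mod n"] n_pos by simp
    hence "b = (\<phi> ^^ (\<sigma> N x)) b"
      using mod_cancel_left[OF b maps[OF b]] by blast
    thus "(\<phi> ^^ (\<sigma> N x)) b = (\<phi> ^^ 0) b" by simp
  qed
  from pow_eq_mod[OF this] show ?thesis by simp
qed

lemma sigma_mod: "x < n \<Longrightarrow> \<sigma> (k mod N) x mod N = \<sigma> k x mod N"
proof (induction k rule: less_induct)
  case (less k)
  show ?case
  proof (cases "k < N")
    case True then show ?thesis by simp
  next
    case False
    have "\<sigma> k x = \<sigma> N x + \<sigma> (k - N) ((\<phi> ^^ N) x)"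
      using sigma_add[of N "k - N" x] False by simp
    also have "\<dots> = \<sigma> N x + \<sigma> (k - N) x" using N_id less.prems by simp
    finally have "\<sigma> k x mod N = \<sigma> (k - N) x mod N"
      using sigma_N[OF less.prems] by (simp add: mod_add_left_eq[symmetric])
    moreover have "\<sigma> ((k - N) mod N) x mod N = \<sigma> (k - N) x mod N"
      using less.IH[of "k - N"] less.prems N_pos False by simp
    moreover have "(k - N) mod N = k mod N" using False by (simp add: le_mod_geq)
    ultimately show ?thesis by simp
  qed
qed

lemma pi0: "\<pi> 0 mod N = 1 mod N"
proof -
  have "\<forall>b<n. (\<phi> ^^ (\<pi> 0)) b = (\<phi> ^^ 1) b"
    using skpow_prop[of 0] n_pos phi0 maps by simp
  from pow_eq_mod[OF this] show ?thesis .
qed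

lemma sigma0: "\<sigma> j 0 mod N = j mod N"
proof -
  have "\<sigma> j 0 = j * \<pi> 0" by (simp add: \<sigma>_def pow0)
  hence "\<sigma> j 0 mod N = (j * (\<pi> 0 mod N)) mod N" by (simp add: mod_mult_right_eq)
  also have "\<dots> = j mod N" using pi0 by (simp add: mod_mult_right_eq)
  finally show ?thesis .
qed

lemma key:
  assumes "x < n" "g < n"
  shows "\<sigma> j ((x + g) mod n) mod N = \<sigma> (\<sigma> j x) g mod N"
proof -
  have "\<forall>b<n. (\<phi> ^^ (\<sigma> j ((x + g) mod n))) b = (\<phi> ^^ (\<sigma> (\<sigma> j x) g)) b"
  proof (intro allI impI)
    fix b assume b: "b < n"
    have xg: "(x + g) mod n < n" "(g + b) mod n < n" using n_pos by auto
    define P where "P = (\<phi> ^^ j) x + (\<phi> ^^ (\<sigma> j x)) g"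
    have A: "(\<phi> ^^ j) (((x + g) mod n + b) mod n)
        = ((\<phi> ^^ j) ((x + g) mod n) + (\<phi> ^^ (\<sigma> j ((x + g) mod n))) b) mod n"
      using F1[OF xg(1) b] .
    have B: "(\<phi> ^^ j) ((x + (g + b) mod n) mod n)
        = ((\<phi> ^^ j) x + (\<phi> ^^ (\<sigma> j x)) ((g + b) mod n)) mod n"
      using F1[OF assms(1) xg(2)] .
    have C: "(\<phi> ^^ (\<sigma> j x)) ((g + b) mod n) = ((\<phi> ^^ (\<sigma> j x)) g + (\<phi> ^^ (\<sigma> (\<sigma> j x) g)) b) mod n"
      using F1[OF assms(2) b] .
    have D: "(\<phi> ^^ j) ((x + g) mod n) = P mod n"
      using F1[OF assms] by (simp add: P_def)
    have same: "((x + g) mod n + b) mod n = (x + (g + b) mod n) mod n"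
      by (simp add: mod_simps add.assoc)
    have "(P + (\<phi> ^^ (\<sigma> j ((x + g) mod n))) b) mod n = (P + (\<phi> ^^ (\<sigma> (\<sigma> j x) g)) b) mod n"
      using A B C D same unfolding P_def by (simp add: mod_simps add.assoc)
    thus "(\<phi> ^^ (\<sigma> j ((x + g) mod n))) b = (\<phi> ^^ (\<sigma> (\<sigma> j x) g)) b"
      using mod_cancel_left maps b by blast
  qed
  from pow_eq_mod[OF this] show ?thesis .
qed

definition "g = 1 mod n"
definition "\<psi> = snd (derived (n, \<phi>))"

lemma g_lt: "g < n" using n_pos by (simp add: g_def)

lemma psi_def': "\<psi> a = \<sigma> a g mod N"
  by (simp add: \<psi>_def derived_def \<sigma>_def \<pi>_def N_def g_def)

lemma fst_derived: "fst (derived (n, \<phi>)) = N"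
  by (simp add: derived_def N_def)

lemma psi_iter: "j < N \<Longrightarrow> (\<psi> ^^ m) j = \<sigma> j (m mod n) mod N"
proof (induction m)
  case 0 then show ?case using sigma0 by simp
next
  case (Suc m)
  have mn: "m mod n < n" using n_pos by simp
  have "(\<psi> ^^ Suc m) j = \<psi> (\<sigma> j (m mod n) mod N)"
    using Suc by simp
  also have "\<dots> = \<sigma> (\<sigma> j (m mod n) mod N) g mod N" by (rule psi_def')
  also have "\<dots> = \<sigma> (\<sigma> j (m mod n)) g mod N" using sigma_mod g_lt by blast
  also have "\<dots> = \<sigma> j ((m mod n + g) mod n) mod N" using key[OF mn g_lt] by simp
  also have "(m mod n + g) mod n = Suc m mod n" by (simp add: g_def mod_simps)
  finally show ?case .
qed

lemma derived_skew: "is_skew_morphism N \<psi>"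
proof -
  have into: "\<psi> ` {0..<N} \<subseteq> {0..<N}" using N_pos by (auto simp: psi_def')
  have psin: "(\<psi> ^^ n) j = j" if "j < N" for j
    using psi_iter[OF that, of n] sigma0 that by simp
  have "inj_on \<psi> {0..<N}"
  proof (rule inj_onI)
    fix x y assume xy: "x \<in> {0..<N}" "y \<in> {0..<N}" "\<psi> x = \<psi> y"
    have "\<psi> ^^ n = \<psi> ^^ (n - 1) \<circ> \<psi>"
      using n_pos by (metis Suc_diff_1 funpow_Suc_right less_le_trans zero_less_one)
    then show "x = y" using psin xy by (metis atLeastLessThan_iff comp_apply)
  qed
  hence bij: "bij_betw \<psi> {0..<N} {0..<N}"
    using endo_inj_surj[OF _ into] by (simp add: bij_betw_def)
  have z: "\<psi> 0 = 0" by (simp add: psi_def' \<sigma>_def)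
  have sk: "\<exists>k. \<forall>b<N. \<psi> ((a + b) mod N) = (\<psi> a + (\<psi> ^^ k) b) mod N" if "a < N" for a
  proof (intro exI allI impI)
    fix b assume b: "b < N"
    have "\<psi> ((a + b) mod N) = \<sigma> (a + b) g mod N"
      using sigma_mod[OF g_lt] by (simp add: psi_def')
    also have "\<dots> = (\<sigma> a g + \<sigma> b ((\<phi> ^^ a) g)) mod N" by (simp add: sigma_add)
    also have "\<dots> = (\<psi> a + (\<psi> ^^ ((\<phi> ^^ a) g)) b) mod N"
      using psi_iter[OF b, of "(\<phi> ^^ a) g"] maps[OF g_lt, of a]
      by (simp add: psi_def' mod_simps)
    finally show "\<psi> ((a + b) mod N) = (\<psi> a + (\<psi> ^^ ((\<phi> ^^ a) g)) b) mod N" .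
  qed
  show ?thesis unfolding is_skew_morphism_def using N_pos bij z sk by auto
qed

lemma fix_pow: "f x = x \<Longrightarrow> (f ^^ q) x = x"
  by (induction q) auto

lemma N_lt:
  assumes n2: "n \<ge> 2"
  shows "N < n"
proof -
  have one: "1 < n" using n2 by simp
  have ex: "\<exists>k. k > 0 \<and> (\<phi> ^^ k) 1 = 1" using N_pos N_id[OF one] by blast
  define t where "t = (LEAST k. k > 0 \<and> (\<phi> ^^ k) 1 = 1)"
  have t: "t > 0" "(\<phi> ^^ t) 1 = 1" using LeastI_ex[OF ex] unfolding t_def by auto
  have tmin: "\<not> ((\<phi> ^^ k) 1 = 1)" if "0 < k" "k < t" for k
    using not_less_Least[of k "\<lambda>k. k > 0 \<and> (\<phi> ^^ k) 1 = 1"] that unfolding t_def by auto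
  have T1: "(\<phi> ^^ k) 1 = 1 \<longleftrightarrow> t dvd k" for k
  proof
    assume k: "(\<phi> ^^ k) 1 = 1"
    have "k = k mod t + t * (k div t)" by simp
    hence "(\<phi> ^^ k) 1 = (\<phi> ^^ (k mod t)) (((\<phi> ^^ t) ^^ (k div t)) 1)"
      by (metis comp_apply funpow_add funpow_mult)
    also have "((\<phi> ^^ t) ^^ (k div t)) 1 = 1" using t(2) by (rule fix_pow)
    finally have "(\<phi> ^^ (k mod t)) 1 = 1" using k by simp
    hence "k mod t = 0" using tmin[of "k mod t"] t(1) by (metis mod_less_divisor neq0_conv)
    thus "t dvd k" by auto
  next
    assume "t dvd k"
    then obtain q where "k = t * q" by auto
    thus "(\<phi> ^^ k) 1 = 1" using fix_pow[of "\<phi> ^^ t" 1 q] t(2) by (simp add: funpow_mult)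
  qed
  have T2: "(\<phi> ^^ (\<sigma> u 1)) 1 = 1" if u: "(\<phi> ^^ u) 1 = 1" for u
  proof -
    define s where "s = \<sigma> u 1"
    have it: "(\<phi> ^^ (u * i)) ((1 + b) mod n) = (1 + (\<phi> ^^ (s * i)) b) mod n" if b: "b < n" for i b
    proof (induction i)
      case 0 then show ?case by simp
    next
      case (Suc i)
      have "(\<phi> ^^ (u * Suc i)) ((1 + b) mod n) = (\<phi> ^^ u) ((\<phi> ^^ (u * i)) ((1 + b) mod n))"
        by (simp add: funpow_add)
      also have "\<dots> = (\<phi> ^^ u) ((1 + (\<phi> ^^ (s * i)) b) mod n)" using Suc by simp
      also have "\<dots> = (1 + (\<phi> ^^ s) ((\<phi> ^^ (s * i)) b)) mod n"
        using F1[OF one maps[OF b], of u] u by (simp add: s_def)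
      also have "\<dots> = (1 + (\<phi> ^^ (s * Suc i)) b) mod n" by (simp add: funpow_add)
      finally show ?case .
    qed
    define G0 where "G0 = gcd N u"
    define i where "i = N div G0"
    have G0pos: "G0 > 0" using N_pos by (simp add: G0_def)
    have NGi: "N = G0 * i" by (simp add: i_def G0_def)
    have "u * i = (u div G0) * N"
      unfolding i_def G0_def by (metis dvd_div_mult dvd_mult_div_cancel gcd_dvd1 gcd_dvd2 mult.commute)
    hence ui: "(u * i) mod N = 0" by simp
    have "\<forall>b<n. (\<phi> ^^ (s * i)) b = (\<phi> ^^ 0) b"
    proof (intro allI impI)
      fix b assume b: "b < n"
      have "(\<phi> ^^ (u * i)) ((1 + b) mod n) = (1 + b) mod n"
        using pow_mod[of "(1 + b) mod n" "u * i"] ui n_pos by simp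
      hence "(1 + b) mod n = (1 + (\<phi> ^^ (s * i)) b) mod n" using it[OF b, of i] by simp
      hence "b = (\<phi> ^^ (s * i)) b" by (rule mod_cancel_left[OF b maps[OF b]])
      thus "(\<phi> ^^ (s * i)) b = (\<phi> ^^ 0) b" by simp
    qed
    hence "(s * i) mod N = 0 mod N" by (rule pow_eq_mod)
    hence "(s * i) mod N = 0" by simp
    hence "G0 * i dvd s * i" using NGi by auto
    moreover have "i > 0" using NGi N_pos by (metis mult_0_right neq0_conv)
    ultimately have "G0 dvd s" by simp
    moreover have "t dvd N" using T1 N_id[OF one] by blast
    moreover have "t dvd u" using T1 u by blast
    ultimately have "t dvd s" unfolding G0_def by (meson dvd_trans gcd_greatest)
    thus ?thesis using T1 s_def by blast
  qed
  have T3: "\<forall>u. (\<phi> ^^ u) 1 = 1 \<longrightarrow> (\<phi> ^^ u) b = b" if "b < n" for b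
    using that
  proof (induction b)
    case 0 then show ?case by (simp add: pow0)
  next
    case (Suc b)
    show ?case
    proof (intro allI impI)
      fix u assume u: "(\<phi> ^^ u) 1 = 1"
      have b: "b < n" using Suc.prems by simp
      have "(\<phi> ^^ u) ((1 + b) mod n) = (1 + (\<phi> ^^ (\<sigma> u 1)) b) mod n"
        using F1[OF one b, of u] u by simp
      also have "(\<phi> ^^ (\<sigma> u 1)) b = b" using Suc.IH[OF b] T2[OF u] by blast
      finally show "(\<phi> ^^ u) (Suc b) = Suc b" using Suc.prems by simp
    qed
  qed
  have Nt: "N \<le> t" using N_le[OF t(1)] T3 t(2) by blast
  have dist: "(\<phi> ^^ i) 1 \<noteq> (\<phi> ^^ j) 1" if "i < j" "j < t" for i j
  proof
    assume eq: "(\<phi> ^^ i) 1 = (\<phi> ^^ j) 1"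
    have "(\<phi> ^^ i) ((\<phi> ^^ (j - i)) 1) = (\<phi> ^^ j) 1"
      using that(1) by (metis add_diff_inverse_nat comp_apply funpow_add less_imp_not_less)
    hence "(\<phi> ^^ i) ((\<phi> ^^ (j - i)) 1) = (\<phi> ^^ i) 1" using eq by simp
    hence "(\<phi> ^^ (j - i)) 1 = 1"
      using inj_onD[OF inj_pow[of i]] maps[OF one, of "j - i"] one by simp
    moreover have "0 < j - i" "j - i < t" using that by arith+
    ultimately show False using tmin by blast
  qed
  have "inj_on (\<lambda>i. (\<phi> ^^ i) 1) {0..<t}"
    by (rule inj_onI) (metis atLeastLessThan_iff dist linorder_neqE_nat)
  moreover have "(\<lambda>i. (\<phi> ^^ i) 1) ` {0..<t} \<subseteq> {1..<n}"
  proof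
    fix y assume "y \<in> (\<lambda>i. (\<phi> ^^ i) 1) ` {0..<t}"
    then obtain i where y: "y = (\<phi> ^^ i) 1" by auto
    have "y \<noteq> 0"
    proof
      assume "y = 0"
      hence "(\<phi> ^^ i) 1 = (\<phi> ^^ i) 0" using y pow0 by simp
      thus False using inj_pow[of i] one by (auto dest: inj_onD)
    qed
    thus "y \<in> {1..<n}" using maps[OF one] y by auto
  qed
  ultimately have "card {0..<t} \<le> card {1..<n}" by (intro card_inj_on_le) auto
  hence "t < n" using n2 by simp
  thus ?thesis using Nt by simp
qed

lemma triv_iff_N1: "is_trivial_perm n \<phi> \<longleftrightarrow> N = 1"
proof
  assume "is_trivial_perm n \<phi>"
  hence "N \<le> 1" using N_le[of 1] by (simp add: is_trivial_perm_def)
  thus "N = 1" using N_pos by simp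
next
  assume "N = 1"
  thus "is_trivial_perm n \<phi>" using N_id by (simp add: is_trivial_perm_def)
qed

lemma triv_auto: "is_trivial_perm n \<phi> \<Longrightarrow> is_automorphism n \<phi>"
  using n_pos bij by (simp add: is_trivial_perm_def is_automorphism_def mod_simps)

lemma n1_N: "n = 1 \<Longrightarrow> N = 1"
  using triv_iff_N1 phi0 by (simp add: is_trivial_perm_def)

lemma auto_derived_triv:
  assumes "is_automorphism n \<phi>"
  shows "is_trivial_perm N \<psi>"
proof -
  have pia: "\<pi> a mod N = 1 mod N" if a: "a < n" for a
  proof -
    have "\<forall>b<n. (\<phi> ^^ (\<pi> a)) b = (\<phi> ^^ 1) b"
    proof (intro allI impI)
      fix b assume b: "b < n"
      have "(\<phi> a + (\<phi> ^^ (\<pi> a)) b) mod n = (\<phi> a + \<phi> b) mod n"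
        using skpow_prop[OF a b] assms a b by (simp add: is_automorphism_def)
      hence "(\<phi> ^^ (\<pi> a)) b = \<phi> b" using mod_cancel_left maps maps1 b by blast
      thus "(\<phi> ^^ (\<pi> a)) b = (\<phi> ^^ 1) b" by simp
    qed
    thus ?thesis by (rule pow_eq_mod)
  qed
  show ?thesis unfolding is_trivial_perm_def
  proof (intro allI impI)
    fix k assume k: "k < N"
    have "\<psi> k = (\<Sum>i<k. \<pi> ((\<phi> ^^ i) g) mod N) mod N"
      by (simp add: psi_def' \<sigma>_def mod_sum_eq)
    also have "\<dots> = (\<Sum>i<k. 1 mod N) mod N"
      using pia maps[OF g_lt] by simp
    also have "\<dots> = k mod N" by (simp add: mod_mult_right_eq)
    finally show "\<psi> k = k" using k by simp
  qed
qed

lemma derived_triv_auto: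
  assumes n2: "n \<ge> 2" and N2: "N \<ge> 2" and p1: "\<psi> 1 = 1"
  shows "is_automorphism n \<phi>"
proof -
  have one: "1 < n" using n2 by simp
  have "\<psi> 1 = \<pi> 1 mod N" using n2 by (simp add: psi_def' \<sigma>_def g_def)
  hence pi1: "\<pi> 1 mod N = 1 mod N" using p1 N2 by simp
  have add1: "\<phi> ((1 + b) mod n) = (\<phi> 1 + \<phi> b) mod n" if b: "b < n" for b
  proof -
    have "(\<phi> ^^ (\<pi> 1)) b = (\<phi> ^^ 1) b" using pow_mod[OF b] pi1 by metis
    thus ?thesis using skpow_prop[OF one b] by simp
  qed
  have lin: "\<phi> (k mod n) = (k * \<phi> 1) mod n" for k
  proof (induction k)
    case 0 then show ?case by (simp add: phi0)
  next
    case (Suc k)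
    have "Suc k mod n = (1 + k mod n) mod n" by (simp add: mod_simps)
    hence "\<phi> (Suc k mod n) = (\<phi> 1 + \<phi> (k mod n)) mod n"
      using add1[of "k mod n"] n_pos by simp
    also have "\<dots> = (Suc k * \<phi> 1) mod n" using Suc by (simp add: mod_simps)
    finally show ?case .
  qed
  have "\<phi> ((a + b) mod n) = (\<phi> a + \<phi> b) mod n" if "a < n" "b < n" for a b
  proof -
    have "\<phi> a = (a * \<phi> 1) mod n" "\<phi> b = (b * \<phi> 1) mod n"
      using lin[of a] lin[of b] that by simp_all
    thus ?thesis using lin[of "a + b"] by (simp add: mod_simps distrib_right)
  qed
  thus ?thesis using n_pos bij by (simp add: is_automorphism_def)
qed
end


lemma fst_derived_gen: "fst (derived p) = skord (fst p) (snd p)"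
  by (cases p) (simp add: derived_def)

lemma iter_Suc: "iter_derived (Suc i) n \<phi> = derived (iter_derived i n \<phi>)"
  by (simp add: iter_derived_def)

lemma iter_shift:
  "iter_derived i (skord n \<phi>) (snd (derived (n, \<phi>))) = iter_derived (Suc i) n \<phi>"
proof -
  have "derived (n, \<phi>) = (skord n \<phi>, snd (derived (n, \<phi>)))"
    using fst_derived_gen[of "(n, \<phi>)"] by (metis fst_conv prod.collapse snd_conv)
  thus ?thesis unfolding iter_derived_def by (metis funpow_Suc_right comp_apply)
qed

lemma iter_skew:
  assumes "is_skew_morphism n \<phi>"
  shows "is_skew_morphism (fst (iter_derived i n \<phi>)) (snd (iter_derived i n \<phi>))"
proof (induction i)
  case 0 then show ?case using assms by (simp add: iter_derived_def)
next
  case (Suc i)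
  interpret s: skm "fst (iter_derived i n \<phi>)" "snd (iter_derived i n \<phi>)"
    using Suc by unfold_locales
  show ?case using s.derived_skew unfolding iter_Suc s.\<psi>_def s.N_def
    by (simp add: fst_derived_gen)
qed

theorem lemma4p1:
  fixes n c m :: nat and \<phi> :: "nat \<Rightarrow> nat"
  assumes "n \<ge> 2"
    and "is_skew_morphism n \<phi>"
    and "c = complexity n \<phi>"
    and "m = auto_order n \<phi>"
  shows "(c \<ge> 0 \<and> m \<ge> 2)
    \<and> (is_trivial_perm n \<phi> \<longleftrightarrow> c = 0)
    \<and> ((is_automorphism n \<phi> \<and> \<not> is_trivial_perm n \<phi>) \<longleftrightarrow> c = 1)
    \<and> (is_proper_skew n \<phi> \<longleftrightarrow> c \<ge> 2)
    \<and> (c \<ge> 1 \<longrightarrow> complexity (skord n \<phi>) (snd (derived (n, \<phi>))) = c - 1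
                    \<and> auto_order (skord n \<phi>) (snd (derived (n, \<phi>))) = m)
    \<and> (c \<ge> 1 \<longrightarrow> is_automorphism (fst (iter_derived (c - 1) n \<phi>)) (snd (iter_derived (c - 1) n \<phi>))
                    \<and> skord (fst (iter_derived (c - 1) n \<phi>)) (snd (iter_derived (c - 1) n \<phi>)) = m)"
proof -
  interpret s0: skm n \<phi> using assms(2) by unfold_locales
  define It where "It i = iter_derived i n \<phi>" for i
  have ItS: "It (Suc i) = derived (It i)" for i by (simp add: It_def iter_Suc)
  have inv: "is_skew_morphism (fst (It i)) (snd (It i))" for i
    using iter_skew[OF assms(2)] by (simp add: It_def)
  have stepN: "fst (It (Suc i)) = skord (fst (It i)) (snd (It i))" for i
    by (simp add: ItS fst_derived_gen)
  define Q where "Q i = (fst (It i) \<ge> 2 \<and> is_trivial_perm (fst (It i)) (snd (It i)))" for i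
  have exQ: "\<exists>i. Q i"
  proof (rule ccontr)
    assume nQ: "\<not> (\<exists>i. Q i)"
    have "fst (It i) \<ge> 2 \<and> fst (It i) + i \<le> n" for i
    proof (induction i)
      case 0 then show ?case using assms(1) by (simp add: It_def iter_derived_def)
    next
      case (Suc i)
      interpret s: skm "fst (It i)" "snd (It i)" using inv by unfold_locales
      have "\<not> is_trivial_perm (fst (It i)) (snd (It i))" using nQ Suc.IH by (auto simp: Q_def)
      hence "s.N \<noteq> 1" using s.triv_iff_N1 by simp
      hence "s.N \<ge> 2" using s.N_pos by simp
      moreover have "s.N < fst (It i)" using s.N_lt Suc.IH by simp
      ultimately show ?case using Suc.IH stepN[of i] unfolding s.N_def by simp
    qed
    from this[of n] show False by linarith
  qed
  have cdef: "c = (LEAST i. Q i)" by (simp add: assms(3) complexity_def Q_def It_def)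
  have Qc: "Q c" using LeastI_ex[OF exQ] cdef by simp
  have cmin: "\<not> Q i" if "i < c" for i using not_less_Least[of i Q] that cdef by simp
  have cle: "c \<le> i" if "Q i" for i using Least_le[of Q i] that cdef by simp
  have mdef: "m = fst (It c)" by (simp add: assms(4) auto_order_def assms(3)[symmetric] It_def)
  have It0: "It 0 = (n, \<phi>)" by (simp add: It_def iter_derived_def)
  have It1: "It 1 = (s0.N, s0.\<psi>)"
    using ItS[of 0] It0 fst_derived_gen[of "(n, \<phi>)"] unfolding s0.N_def s0.\<psi>_def
    by (metis One_nat_def fst_conv prod.collapse snd_conv)
  have Q0: "Q 0 \<longleftrightarrow> is_trivial_perm n \<phi>" using It0 assms(1) by (simp add: Q_def)
  have Q1: "Q 1 \<longleftrightarrow> is_automorphism n \<phi>" if nt: "\<not> is_trivial_perm n \<phi>"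
  proof -
    have N2: "s0.N \<ge> 2" using nt s0.triv_iff_N1 s0.N_pos by simp
    show ?thesis
    proof
      assume "Q 1"
      hence "is_trivial_perm s0.N s0.\<psi>" using It1 by (simp add: Q_def)
      hence "s0.\<psi> 1 = 1" using N2 by (simp add: is_trivial_perm_def)
      thus "is_automorphism n \<phi>" using s0.derived_triv_auto assms(1) N2 by blast
    next
      assume "is_automorphism n \<phi>"
      thus "Q 1" using s0.auto_derived_triv N2 It1 by (simp add: Q_def)
    qed
  qed
  have m2: "m \<ge> 2" using Qc mdef by (simp add: Q_def)
  have b: "is_trivial_perm n \<phi> \<longleftrightarrow> c = 0"
    using Q0 cle Qc by fastforce
  have cc: "(is_automorphism n \<phi> \<and> \<not> is_trivial_perm n \<phi>) \<longleftrightarrow> c = 1"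
  proof
    assume a: "is_automorphism n \<phi> \<and> \<not> is_trivial_perm n \<phi>"
    hence "Q 1" using Q1 by simp
    hence "c \<le> 1" using cle by simp
    moreover have "c \<noteq> 0" using a b by simp
    ultimately show "c = 1" by simp
  next
    assume c1: "c = 1"
    hence nt: "\<not> is_trivial_perm n \<phi>" using b by simp
    thus "is_automorphism n \<phi> \<and> \<not> is_trivial_perm n \<phi>" using Q1 Qc c1 by simp
  qed
  have d: "is_proper_skew n \<phi> \<longleftrightarrow> c \<ge> 2"
    using b cc s0.triv_auto assms(2) unfolding is_proper_skew_def by fastforce
  have e: "c \<ge> 1 \<longrightarrow> complexity (skord n \<phi>) (snd (derived (n, \<phi>))) = c - 1
                    \<and> auto_order (skord n \<phi>) (snd (derived (n, \<phi>))) = m"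
  proof
    assume c1: "c \<ge> 1"
    have "complexity (skord n \<phi>) (snd (derived (n, \<phi>))) = (LEAST i. Q (Suc i))"
      unfolding complexity_def iter_shift Q_def It_def by simp
    also have "\<dots> = c - 1"
    proof (rule Least_equality)
      show "Q (Suc (c - 1))" using Qc c1 by simp
    next
      fix y assume "Q (Suc y)"
      thus "c - 1 \<le> y" using cle by fastforce
    qed
    finally have cx: "complexity (skord n \<phi>) (snd (derived (n, \<phi>))) = c - 1" .
    have "auto_order (skord n \<phi>) (snd (derived (n, \<phi>))) = fst (It (Suc (c - 1)))"
      unfolding auto_order_def cx iter_shift It_def ..
    also have "\<dots> = m" using c1 mdef by simp
    finally show "complexity (skord n \<phi>) (snd (derived (n, \<phi>))) = c - 1
                    \<and> auto_order (skord n \<phi>) (snd (derived (n, \<phi>))) = m" using cx by simp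
  qed
  have f: "c \<ge> 1 \<longrightarrow> is_automorphism (fst (It (c - 1))) (snd (It (c - 1)))
                    \<and> skord (fst (It (c - 1))) (snd (It (c - 1))) = m"
  proof
    assume c1: "c \<ge> 1"
    define k where "k = c - 1"
    have ck: "c = Suc k" using c1 k_def by simp
    interpret s: skm "fst (It k)" "snd (It k)" using inv by unfold_locales
    have Nm: "s.N = m" using mdef ck stepN[of k] by (simp add: s.N_def)
    have "It c = (s.N, s.\<psi>)"
      using ItS[of k] ck fst_derived_gen[of "It k"] unfolding s.N_def s.\<psi>_def
      by (metis fst_conv prod.collapse snd_conv)
    hence "is_trivial_perm m s.\<psi>" using Qc Nm by (simp add: Q_def)
    hence p1: "s.\<psi> 1 = 1" using m2 by (simp add: is_trivial_perm_def)
    have "fst (It k) \<noteq> 1" using s.n1_N Nm m2 by auto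
    hence "fst (It k) \<ge> 2" using s.n_pos by simp
    hence "is_automorphism (fst (It k)) (snd (It k))"
      using s.derived_triv_auto Nm m2 p1 by simp
    thus "is_automorphism (fst (It (c - 1))) (snd (It (c - 1)))
                    \<and> skord (fst (It (c - 1))) (snd (It (c - 1))) = m"
    proof -
      have "skord (fst (It k)) (snd (It k)) = m" using Nm unfolding s.N_def .
      thus ?thesis using \<open>is_automorphism (fst (It k)) (snd (It k))\<close> k_def by simp
    qed
  qed
  show ?thesis using m2 b cc d e f unfolding It_def by simp
qed
end
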